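(* The class of I$^2$-GNNs can count $3$-paths and $4$-paths at node level: for $L\in\{3,4\}$ and all node-graph pairs $(i_1,G_1),(i_2,G_2)$ with $C(L\text{-path},i_1,G_1)\ne C(L\text{-path},i_2,G_2)$, there exists an I$^2$-GNN whose node representations satisfy $h_{i_1}(G_1)\ne h_{i_2}(G_2)$.
   Context: Graphs are finite, simple, undirected, $G=(V,E)$, possibly carrying node attributes $x_v$ and edge attributes $e_{u,v}$ (a fixed constant when absent). $N(v)$ is the neighbour set of $v$. For $L\ge1$, an $L$-path is a sequence of edges $(v_1,v_2),\dots,(v_L,v_{L+1})$ with $v_1,\dots,v_{L+1}$ pairwise distinct; two paths are identified when their edge sets coincide; $C(L\text{-path},i,G)$ is the number of inequivalent $L$-paths starting from $i$ (i.e. with $v_1=i$). A class $\mathcal F$ of functions on node-graph pairs can count $S$ at node level if for all $(i_1,G_1),(i_2,G_2)$ with $C(S,i_1,G_1)\ne C(S,i_2,G_2)$ there is $f\in\mathcal F$ with $f(i_1,G_1)\ne f(i_2,G_2)$. I$^2$-GNNs. An I$^2$-GNN is specified by an integer $K\ge1$, $T$, arbitrary functions $M_t$ (values in some $\mathbb R^{d_t}$), $U_t$, and arbitrary readouts $R_{\text{edge}},R_{\text{node}}$ on finite multisets. For each root $i\in V$ let $(V_i,E_i)$ be the subgraph of $G$ induced by nodes at shortest-path distance at most $K$ from $i$, and $N_i(k)=\{l\in V_i:(k,l)\in E_i\}$. For each $j\in N(i)$ and $k\in V_i$: $h^{(0)}_{i,j,k}=x_k\oplus\mathbb 1_{k=i}\oplus\mathbb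 1_{k=j}$, $h^{(t+1)}_{i,j,k}=U_t\big(h^{(t)}_{i,j,k},\sum_{l\in N_i(k)}M_t(h^{(t)}_{i,j,k},h^{(t)}_{i,j,l},e_{k,l})\big)$; then $h_{i,j}=R_{\text{edge}}(\{\!\{h^{(T)}_{i,j,k}:k\in V_i\}\!\})$ and $h_i=R_{\text{node}}(\{\!\{h_{i,j}:j\in N(i)\}\!\})$. The node-level function computed is $(i,G)\mapsto h_i$; the class of I$^2$-GNNs consists of all such choices. *)

theory Defs
  imports Complex_Main "HOL-Library.Multiset"
begin

text \<open>Node attributes x_v and edge attributes e_{u,v} are real vectors (real lists);
  when absent they are a fixed constant (e.g. the empty list).\<close>

record 'v graph =
  verts :: "'v set"
  adj   :: "'v \<Rightarrow> 'v \<Rightarrow> bool"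
  nattr :: "'v \<Rightarrow> real list"
  eattr :: "'v \<Rightarrow> 'v \<Rightarrow> real list"

definition wf_graph :: "('v, 'z) graph_scheme \<Rightarrow> bool" where
  "wf_graph G \<longleftrightarrow> finite (verts G)
     \<and> (\<forall>u v. adj G u v \<longrightarrow> u \<in> verts G \<and> v \<in> verts G)
     \<and> (\<forall>u v. adj G u v \<longrightarrow> adj G v u)
     \<and> (\<forall>u. \<not> adj G u u)
     \<and> (\<forall>u v. eattr G u v = eattr G v u)"

definition is_lpath :: "('v, 'z) graph_scheme \<Rightarrow> nat \<Rightarrow> 'v list \<Rightarrow> bool" where
  "is_lpath G L p \<longleftrightarrow> length p = L + 1 \<and> distinct p \<and> set p \<subseteq> verts G
     \<and> (\<forall>k<L. adj G (p ! k) (p ! Suc k))"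

definition path_edges :: "'v list \<Rightarrow> 'v set set" where
  "path_edges p = {{p ! k, p ! Suc k} | k. Suc k < length p}"

definition count_paths :: "('v, 'z) graph_scheme \<Rightarrow> nat \<Rightarrow> 'v \<Rightarrow> nat" where
  "count_paths G L i = card {path_edges p | p. is_lpath G L p \<and> hd p = i}"

text \<open>Hidden states are real vectors (real lists); messages of layer t lie in R^(dim t)
  (real lists of length dim t), summed componentwise.\<close>

record i2gnn =
  hops   :: nat
  layers :: nat
  dim    :: "nat \<Rightarrow> nat"
  msg    :: "nat \<Rightarrow> real list \<Rightarrow> real list \<Rightarrow> real list \<Rightarrow> real list"
  upd    :: "nat \<Rightarrow> real list \<Rightarrow> real list \<Rightarrow> real list"
  redge  :: "real list multiset \<Rightarrow> real list"
  rnode  :: "real list multiset \<Rightarrow> real list"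

definition is_i2gnn :: "i2gnn \<Rightarrow> bool" where
  "is_i2gnn N \<longleftrightarrow> hops N \<ge> 1 \<and> (\<forall>t a b c. length (msg N t a b c) = dim N t)"

definition vsum :: "nat \<Rightarrow> ('a \<Rightarrow> real list) \<Rightarrow> 'a set \<Rightarrow> real list" where
  "vsum d f S = map (\<lambda>c. \<Sum>l\<in>S. f l ! c) [0..<d]"

fun reach :: "('v, 'z) graph_scheme \<Rightarrow> nat \<Rightarrow> 'v \<Rightarrow> 'v \<Rightarrow> bool" where
  "reach G 0 i v = (v = i \<and> i \<in> verts G)"
| "reach G (Suc n) i v = (reach G n i v \<or> (\<exists>u. reach G n i u \<and> adj G u v))"

definition sub_verts :: "('v, 'z) graph_scheme \<Rightarrow> nat \<Rightarrow> 'v \<Rightarrow> 'v set" where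
  "sub_verts G K i = {v \<in> verts G. reach G K i v}"

definition sub_nbrs :: "('v, 'z) graph_scheme \<Rightarrow> nat \<Rightarrow> 'v \<Rightarrow> 'v \<Rightarrow> 'v set" where
  "sub_nbrs G K i k = {l \<in> sub_verts G K i. adj G k l}"

definition ind :: "bool \<Rightarrow> real" where
  "ind b = (if b then 1 else 0)"

fun hid :: "i2gnn \<Rightarrow> ('v, 'z) graph_scheme \<Rightarrow> nat \<Rightarrow> 'v \<Rightarrow> 'v \<Rightarrow> 'v \<Rightarrow> real list" where
  "hid N G 0 i j k = nattr G k @ [ind (k = i), ind (k = j)]"
| "hid N G (Suc t) i j k =
     upd N t (hid N G t i j k)
       (vsum (dim N t) (\<lambda>l. msg N t (hid N G t i j k) (hid N G t i j l) (eattr G k l))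
          (sub_nbrs G (hops N) i k))"

definition edge_rep :: "i2gnn \<Rightarrow> ('v, 'z) graph_scheme \<Rightarrow> 'v \<Rightarrow> 'v \<Rightarrow> real list" where
  "edge_rep N G i j =
     redge N (image_mset (\<lambda>k. hid N G (layers N) i j k) (mset_set (sub_verts G (hops N) i)))"

definition node_rep :: "i2gnn \<Rightarrow> ('v, 'z) graph_scheme \<Rightarrow> 'v \<Rightarrow> real list" where
  "node_rep N G i =
     rnode N (image_mset (\<lambda>j. edge_rep N G i j) (mset_set {j \<in> verts G. adj G i j}))"

end

theory Submission
  imports Defs
begin

definition nb :: "('v, 'z) graph_scheme \<Rightarrow> 'v \<Rightarrow> 'v set" where
  "nb G v = {u \<in> verts G. adj G v u}"

lemma path_edges_inj:
  assumes p: "is_lpath G L p" and q: "is_lpath G L q" and h: "hd p = hd q"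
    and e: "path_edges p = path_edges q"
  shows "p = q"
proof -
  have lp: "length p = L + 1" and lq: "length q = L + 1" and dp: "distinct p" and dq: "distinct q"
    using p q by (auto simp: is_lpath_def)
  have "k \<le> L \<longrightarrow> (\<forall>m\<le>k. p ! m = q ! m)" for k
  proof (induction k)
    case 0
    then show ?case using h lp lq by (cases p; cases q) auto
  next
    case (Suc k)
    show ?case
    proof
      assume sk: "Suc k \<le> L"
      then have IH: "\<forall>m\<le>k. p ! m = q ! m" using Suc by simp
      have "{p ! k, p ! Suc k} \<in> path_edges p" unfolding path_edges_def using sk lp by auto
      then have "{p ! k, p ! Suc k} \<in> path_edges q" using e by simp
      then obtain n where n: "Suc n < length q" "{p ! k, p ! Suc k} = {q ! n, q ! Suc n}"
        unfolding path_edges_def by auto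
      have pk: "p ! k = q ! k" using IH by simp
      have neq: "p ! Suc k \<noteq> p ! k" using dp lp sk by (simp add: nth_eq_iff_index_eq)
      have "p ! Suc k = q ! Suc k"
      proof (cases "q ! k = q ! n")
        case True
        then have "k = n" using dq n lq sk by (simp add: nth_eq_iff_index_eq)
        then show ?thesis using n pk neq by (auto simp: doubleton_eq_iff)
      next
        case False
        then have "q ! k = q ! Suc n" using n pk by (auto simp: doubleton_eq_iff)
        then have kn: "k = Suc n" using dq n lq sk by (simp add: nth_eq_iff_index_eq)
        then have "p ! Suc k = q ! n" using n pk neq by (auto simp: doubleton_eq_iff)
        also have "\<dots> = p ! n" using IH kn by simp
        finally have "p ! Suc k = p ! n" .
        then show ?thesis using dp lp sk kn by (simp add: nth_eq_iff_index_eq)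
      qed
      then show "\<forall>m\<le>Suc k. p ! m = q ! m" using IH by (auto simp: le_Suc_eq)
    qed
  qed
  then show ?thesis using lp lq by (intro nth_equalityI) (auto simp: less_Suc_eq_le)
qed

lemma count_paths_card:
  "count_paths G L i = card {p. is_lpath G L p \<and> hd p = i}"
proof -
  have "{path_edges p | p. is_lpath G L p \<and> hd p = i} = path_edges ` {p. is_lpath G L p \<and> hd p = i}"
    by auto
  moreover have "inj_on path_edges {p. is_lpath G L p \<and> hd p = i}"
    by (auto intro!: inj_onI path_edges_inj)
  ultimately show ?thesis unfolding count_paths_def by (simp add: card_image)
qed

lemma len4: "length p = 4 \<Longrightarrow> \<exists>a b c d. p = [a,b,c,d]"
  by (auto simp add: length_Suc_conv numeral_eq_Suc)
lemma len5: "length p = 5 \<Longrightarrow> \<exists>a b c d e. p = [a,b,c,d,e]"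
  by (auto simp add: length_Suc_conv numeral_eq_Suc)

lemma count3:
  assumes wf: "wf_graph G" and iv: "i \<in> verts G"
  shows "count_paths G 3 i = (\<Sum>j\<in>nb G i. \<Sum>k\<in>nb G j - {i}. card (nb G k - {i,j}))"
proof -
  have fin: "finite (nb G v)" for v using wf unfolding wf_graph_def nb_def by auto
  let ?T = "SIGMA j:nb G i. SIGMA k:nb G j - {i}. nb G k - {i,j}"
  have irr: "\<not> adj G u u" for u using wf unfolding wf_graph_def by auto
  have "{p. is_lpath G 3 p \<and> hd p = i} = (\<lambda>(j,k,l). [i,j,k,l]) ` ?T"
  proof
    show "{p. is_lpath G 3 p \<and> hd p = i} \<subseteq> (\<lambda>(j,k,l). [i,j,k,l]) ` ?T"
    proof
      fix p assume "p \<in> {p. is_lpath G 3 p \<and> hd p = i}"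
      then have P: "is_lpath G 3 p" "hd p = i" by auto
      then obtain a b c d where pe: "p = [a,b,c,d]" using len4 unfolding is_lpath_def by fastforce
      then have "(b,c,d) \<in> ?T" using P by (auto simp: is_lpath_def nb_def numeral_eq_Suc All_less_Suc)
      then show "p \<in> (\<lambda>(j,k,l). [i,j,k,l]) ` ?T" using pe P by force
    qed
  next
    show "(\<lambda>(j,k,l). [i,j,k,l]) ` ?T \<subseteq> {p. is_lpath G 3 p \<and> hd p = i}"
      using irr iv by (auto simp: is_lpath_def nb_def numeral_eq_Suc All_less_Suc)
  qed
  moreover have "inj_on (\<lambda>(j,k,l). [i,j,k,l]) ?T" by (auto intro!: inj_onI)
  ultimately have "count_paths G 3 i = card ?T" by (simp add: count_paths_card card_image)
  also have "\<dots> = (\<Sum>j\<in>nb G i. \<Sum>k\<in>nb G j - {i}. card (nb G k - {i,j}))"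
    using fin by (simp add: card_SigmaI)
  finally show ?thesis .
qed

lemma count4:
  assumes wf: "wf_graph G" and iv: "i \<in> verts G"
  shows "count_paths G 4 i = (\<Sum>j\<in>nb G i. \<Sum>k\<in>nb G j - {i}. \<Sum>l\<in>nb G k - {i,j}. card (nb G l - {i,j,k}))"
proof -
  have fin: "finite (nb G v)" for v using wf unfolding wf_graph_def nb_def by auto
  let ?T = "SIGMA j:nb G i. SIGMA k:nb G j - {i}. SIGMA l:nb G k - {i,j}. nb G l - {i,j,k}"
  have irr: "\<not> adj G u u" for u using wf unfolding wf_graph_def by auto
  have "{p. is_lpath G 4 p \<and> hd p = i} = (\<lambda>(j,k,l,m). [i,j,k,l,m]) ` ?T"
  proof
    show "{p. is_lpath G 4 p \<and> hd p = i} \<subseteq> (\<lambda>(j,k,l,m). [i,j,k,l,m]) ` ?T"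
    proof
      fix p assume "p \<in> {p. is_lpath G 4 p \<and> hd p = i}"
      then have P: "is_lpath G 4 p" "hd p = i" by auto
      then obtain a b c d e where pe: "p = [a,b,c,d,e]" using len5 unfolding is_lpath_def by fastforce
      then have "(b,c,d,e) \<in> ?T" using P by (auto simp: is_lpath_def nb_def numeral_eq_Suc All_less_Suc)
      then show "p \<in> (\<lambda>(j,k,l,m). [i,j,k,l,m]) ` ?T" using pe P by force
    qed
  next
    show "(\<lambda>(j,k,l,m). [i,j,k,l,m]) ` ?T \<subseteq> {p. is_lpath G 4 p \<and> hd p = i}"
      using irr iv by (auto simp: is_lpath_def nb_def numeral_eq_Suc All_less_Suc)
  qed
  moreover have "inj_on (\<lambda>(j,k,l,m). [i,j,k,l,m]) ?T" by (auto intro!: inj_onI)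
  ultimately have "count_paths G 4 i = card ?T" by (simp add: count_paths_card card_image)
  also have "\<dots> = (\<Sum>j\<in>nb G i. \<Sum>k\<in>nb G j - {i}. \<Sum>l\<in>nb G k - {i,j}. card (nb G l - {i,j,k}))"
    using fin by (simp add: card_SigmaI)
  finally show ?thesis .
qed


definition Mf :: "nat \<Rightarrow> real list \<Rightarrow> real list \<Rightarrow> real list \<Rightarrow> real list" where
  "Mf t hk hl e = (if t = 0 then [1 - hl ! (length hl - 2), last hl]
     else if t = 1 then [(1 - hl!0) * (1 - hl!1) * (hl!2 - 1 - hl!3), (1 - hl!0) * (hl!2 - 1)]
     else [(1 - hl!0) * hl!2])"

definition Uf :: "nat \<Rightarrow> real list \<Rightarrow> real list \<Rightarrow> real list" where
  "Uf t hk m = (if t = 0 then [hk ! (length hk - 2), last hk, m!0, m!1]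
     else if t = 1 then [hk!0, hk!1, m!0, m!1]
     else [hk!1 * m!0, hk!1 * hk!3])"

definition Rf :: "real list multiset \<Rightarrow> real list" where
  "Rf X = [sum_mset (image_mset (\<lambda>x. x!0) X), sum_mset (image_mset (\<lambda>x. x!1) X)]"

definition NN :: i2gnn where
  "NN = \<lparr>hops = 4, layers = 3, dim = (\<lambda>t. if t \<le> 1 then 2 else 1), msg = Mf, upd = Uf,
         redge = Rf, rnode = Rf\<rparr>"

lemma NN_ok: "is_i2gnn NN"
  by (simp add: is_i2gnn_def NN_def Mf_def)

lemma vsum2: "vsum 2 f S = [sum (\<lambda>l. f l ! 0) S, sum (\<lambda>l. f l ! 1) S]"
  by (simp add: vsum_def eval_nat_numeral upt_Suc)

lemma vsum1: "vsum (Suc 0) f S = [sum (\<lambda>l. f l ! 0) S]"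
  by (simp add: vsum_def)

context
  fixes G :: "('v, 'z) graph_scheme" and i j :: 'v
begin

abbreviation "SN \<equiv> sub_nbrs G 4 i"
definition "aa k = ind (k = i)"
definition "bb k = ind (k = j)"
definition "DD k = (\<Sum>l\<in>SN k. 1 - aa l)"
definition "CC k = (\<Sum>l\<in>SN k. bb l)"
definition "SS k = (\<Sum>l\<in>SN k. (1 - aa l) * (1 - bb l) * (DD l - 1 - CC l))"
definition "RR k = (\<Sum>l\<in>SN k. (1 - aa l) * (DD l - 1))"
definition "TT k = (\<Sum>l\<in>SN k. (1 - aa l) * SS l)"

lemma hid1: "hid NN G 1 i j k = [aa k, bb k, DD k, CC k]"
  by (simp add: NN_def Mf_def Uf_def vsum2 aa_def bb_def DD_def CC_def)

lemma hid2: "hid NN G 2 i j k = [aa k, bb k, SS k, RR k]"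
proof -
  have e: "(2::nat) = Suc 1" by simp
  have "hid NN G 2 i j k = hid NN G (Suc 1) i j k" by (simp only: e)
  also have "\<dots> = [aa k, bb k, SS k, RR k]"
    by (simp only: hid.simps hid1) (simp add: NN_def Mf_def Uf_def vsum2 SS_def RR_def)
  finally show ?thesis .
qed

lemma hid3: "hid NN G 3 i j k = [bb k * TT k, bb k * RR k]"
proof -
  have e: "(3::nat) = Suc 2" by simp
  have "hid NN G 3 i j k = hid NN G (Suc 2) i j k" by (simp only: e)
  also have "\<dots> = [bb k * TT k, bb k * RR k]"
    by (simp only: hid.simps hid2) (simp add: NN_def Mf_def Uf_def vsum1 TT_def)
  finally show ?thesis .
qed

end


lemma sum_restr:
  assumes "finite A" "\<And>l. l \<in> A \<Longrightarrow> g l = (if l \<in> X then 0 else f l)"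
  shows "(\<Sum>l\<in>A. g l) = (\<Sum>l\<in>A - X. f l)"
proof -
  have "(\<Sum>l\<in>A. g l) = (\<Sum>l\<in>A. if l \<in> A - X then f l else 0)"
    using assms(2) by (intro sum.cong) auto
  also have "\<dots> = (\<Sum>l\<in>A \<inter> (A - X). f l)" using assms(1) by (simp add: sum.inter_restrict)
  also have "A \<inter> (A - X) = A - X" by auto
  finally show ?thesis .
qed

lemma msum: "sum_mset (image_mset g (image_mset h (mset_set A))) = sum (\<lambda>x. g (h x)) A"
  by (simp add: sum_unfold_sum_mset multiset.map_comp comp_def)

lemma card_rm: "finite A \<Longrightarrow> x \<in> A \<Longrightarrow> real (card (A - {x})) = real (card A) - 1"
proof -
  assume a: "finite A" "x \<in> A"
  then obtain n where "card A = Suc n" using card_gt_0_iff[of A] not0_implies_Suc by blast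
  then show ?thesis using a by (simp add: card_Diff_singleton)
qed

lemma sum_pick: "finite A \<Longrightarrow> j \<in> A \<Longrightarrow> (\<Sum>k\<in>A. (if k = j then 1 else 0) * (f k :: real)) = f j"
proof -
  assume a: "finite A" "j \<in> A"
  have "(\<Sum>k\<in>A. (if k = j then 1 else 0) * f k) = (\<Sum>k\<in>A. if k = j then f k else 0)"
    by (rule sum.cong) auto
  then show ?thesis using a by simp
qed

lemma reach_mono: "reach G n i v \<Longrightarrow> reach G (Suc n) i v" by simp

context
  fixes G :: "('v, 'z) graph_scheme" and i j :: 'v
  assumes wf: "wf_graph G" and iv: "i \<in> verts G" and j: "j \<in> nb G i"
begin

lemma finnb: "finite (nb G v)" using wf unfolding wf_graph_def nb_def by auto
lemma symm: "u \<in> nb G v \<Longrightarrow> v \<in> nb G u" using wf unfolding wf_graph_def nb_def by auto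
lemma irr: "u \<in> nb G v \<Longrightarrow> u \<noteq> v" using wf unfolding wf_graph_def nb_def by auto
lemma reach_nb: "reach G n i v \<Longrightarrow> u \<in> nb G v \<Longrightarrow> reach G (Suc n) i u"
  unfolding nb_def by auto

lemma SN_eq: "reach G 3 i k \<Longrightarrow> SN G i k = nb G k"
proof -
  assume r: "reach G 3 i k"
  have "reach G 4 i l" if "l \<in> nb G k" for l
    using reach_nb[OF r that] by (simp add: numeral_eq_Suc)
  then show ?thesis unfolding sub_nbrs_def sub_verts_def nb_def by auto
qed

lemma r1: "reach G 1 i j" using j iv unfolding nb_def by auto
lemma r2: "k \<in> nb G j \<Longrightarrow> reach G 2 i k" using reach_nb[OF r1] by (simp add: numeral_eq_Suc)
lemma r3: "k \<in> nb G j \<Longrightarrow> l \<in> nb G k \<Longrightarrow> reach G 3 i l"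
  using reach_nb[OF r2] by (simp add: numeral_eq_Suc)
lemma r2_3: "reach G 2 i k \<Longrightarrow> reach G 3 i k" by (simp add: numeral_eq_Suc)
lemma r1_3: "reach G 1 i k \<Longrightarrow> reach G 3 i k" by (simp add: numeral_eq_Suc)

lemma DD_eq: "reach G 3 i k \<Longrightarrow> DD G i k = real (card (nb G k - {i}))"
proof -
  assume r: "reach G 3 i k"
  have "DD G i k = (\<Sum>l\<in>nb G k. 1 - aa i l)" unfolding DD_def SN_eq[OF r] ..
  also have "\<dots> = (\<Sum>l\<in>nb G k - {i}. 1)"
    by (rule sum_restr) (auto simp: finnb aa_def ind_def)
  finally show ?thesis by simp
qed

lemma CC_eq: "reach G 3 i k \<Longrightarrow> CC G i j k = ind (j \<in> nb G k)"
proof -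
  assume r: "reach G 3 i k"
  have "CC G i j k = (\<Sum>l\<in>nb G k. if l = j then 1 else 0)" unfolding CC_def SN_eq[OF r] bb_def ind_def ..
  also have "\<dots> = ind (j \<in> nb G k)" using finnb by (simp add: ind_def)
  finally show ?thesis .
qed

lemma RR_eq: "RR G i j = (\<Sum>k\<in>nb G j - {i}. real (card (nb G k - {i, j})))"
proof -
  have "RR G i j = (\<Sum>k\<in>nb G j. (1 - aa i k) * (DD G i k - 1))"
    unfolding RR_def SN_eq[OF r1_3[OF r1]] ..
  also have "\<dots> = (\<Sum>k\<in>nb G j - {i}. real (card (nb G k - {i, j})))"
  proof (rule sum_restr)
    fix k assume k: "k \<in> nb G j"
    have "j \<in> nb G k - {i}" using symm[OF k] irr[OF j] by auto
    moreover have "nb G k - {i, j} = (nb G k - {i}) - {j}" by auto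
    ultimately have "real (card (nb G k - {i, j})) = real (card (nb G k - {i})) - 1"
      using card_rm[of "nb G k - {i}" j] finnb by simp
    then show "(1 - aa i k) * (DD G i k - 1) = (if k \<in> {i} then 0 else real (card (nb G k - {i, j})))"
      using DD_eq[OF r2_3[OF r2[OF k]]] by (auto simp: aa_def ind_def)
  qed (simp add: finnb)
  finally show ?thesis .
qed

lemma SS_eq: "k \<in> nb G j - {i} \<Longrightarrow> SS G i j k = (\<Sum>l\<in>nb G k - {i, j}. real (card (nb G l - {i, j, k})))"
proof -
  assume k: "k \<in> nb G j - {i}"
  have "SS G i j k = (\<Sum>l\<in>nb G k. (1 - aa i l) * (1 - bb j l) * (DD G i l - 1 - CC G i j l))"
  proof -
    have "SN G i k = nb G k" using k by (intro SN_eq r2_3 r2) auto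
    then show ?thesis unfolding SS_def by simp
  qed
  also have "\<dots> = (\<Sum>l\<in>nb G k - {i, j}. real (card (nb G l - {i, j, k})))"
  proof (rule sum_restr)
    fix l assume l: "l \<in> nb G k"
    have kj: "k \<noteq> j" using k irr by auto
    show "(1 - aa i l) * (1 - bb j l) * (DD G i l - 1 - CC G i j l) =
      (if l \<in> {i, j} then 0 else real (card (nb G l - {i, j, k})))"
    proof (cases "l \<in> {i, j}")
      case True then show ?thesis by (auto simp: aa_def bb_def ind_def)
    next
      case False
      have kA: "k \<in> nb G l - {i}" using symm[OF l] k by auto
      have r: "reach G 3 i l" using r3 k l by auto
      have "real (card (nb G l - {i, j, k})) = real (card (nb G l - {i})) - 1 - ind (j \<in> nb G l)"
      proof (cases "j \<in> nb G l")
        case True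
        have "nb G l - {i, j, k} = (nb G l - {i} - {k}) - {j}" by auto
        moreover have "j \<in> nb G l - {i} - {k}" using True kj irr[OF j] by auto
        ultimately have "real (card (nb G l - {i, j, k})) = real (card (nb G l - {i} - {k})) - 1"
          using card_rm[of "nb G l - {i} - {k}" j] finnb by simp
        also have "\<dots> = real (card (nb G l - {i})) - 1 - 1"
          using card_rm[of "nb G l - {i}" k] kA finnb by simp
        finally show ?thesis using True by (simp add: ind_def)
      next
        case False
        have "nb G l - {i, j, k} = (nb G l - {i} - {k})" using False by auto
        then show ?thesis using False card_rm[of "nb G l - {i}" k] kA finnb
          by (simp add: ind_def)
      qed
      then show ?thesis using False DD_eq[OF r] CC_eq[OF r] by (auto simp: aa_def bb_def ind_def)
    qed
  qed (simp add: finnb)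
  finally show ?thesis .
qed

lemma TT_eq: "TT G i j j = (\<Sum>k\<in>nb G j - {i}. \<Sum>l\<in>nb G k - {i, j}. real (card (nb G l - {i, j, k})))"
proof -
  have "TT G i j j = (\<Sum>k\<in>nb G j. (1 - aa i k) * SS G i j k)"
    unfolding TT_def SN_eq[OF r1_3[OF r1]] ..
  also have "\<dots> = (\<Sum>k\<in>nb G j - {i}. \<Sum>l\<in>nb G k - {i, j}. real (card (nb G l - {i, j, k})))"
    by (rule sum_restr) (auto simp: finnb aa_def ind_def SS_eq)
  finally show ?thesis .
qed

lemma edge_eq: "edge_rep NN G i j = [TT G i j j, RR G i j]"
proof -
  have V: "finite (sub_verts G 4 i)" "j \<in> sub_verts G 4 i"
    using wf r1 j unfolding wf_graph_def sub_verts_def nb_def by (auto simp: numeral_eq_Suc)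
  have e: "hops NN = 4" "layers NN = 3" "redge NN = Rf" by (simp_all add: NN_def)
  have "edge_rep NN G i j = [(\<Sum>k\<in>sub_verts G 4 i. bb j k * TT G i j k), (\<Sum>k\<in>sub_verts G 4 i. bb j k * RR G i k)]"
    unfolding edge_rep_def e Rf_def msum hid3 by simp
  also have "\<dots> = [TT G i j j, RR G i j]" using V by (simp add: bb_def ind_def sum_pick)
  finally show ?thesis .
qed

end

lemma node_eq:
  assumes wf: "wf_graph G" and iv: "i \<in> verts G"
  shows "node_rep NN G i = [real (count_paths G 4 i), real (count_paths G 3 i)]"
proof -
  have e: "rnode NN = Rf" by (simp add: NN_def)
  have n: "{j \<in> verts G. adj G i j} = nb G i" by (simp add: nb_def)
  have "node_rep NN G i = [(\<Sum>j\<in>nb G i. edge_rep NN G i j ! 0), (\<Sum>j\<in>nb G i. edge_rep NN G i j ! 1)]"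
    unfolding node_rep_def e Rf_def msum n by simp
  also have "\<dots> = [(\<Sum>j\<in>nb G i. TT G i j j), (\<Sum>j\<in>nb G i. RR G i j)]"
    using edge_eq[OF wf iv] by (simp cong: sum.cong)
  also have "\<dots> = [real (count_paths G 4 i), real (count_paths G 3 i)]"
    unfolding count3[OF wf iv] count4[OF wf iv] of_nat_sum
    using TT_eq[OF wf iv] RR_eq[OF wf iv] by (simp cong: sum.cong)
  finally show ?thesis .
qed

theorem theorem4:
  fixes G1 :: "'v graph" and G2 :: "'w graph" and i1 :: 'v and i2 :: 'w and L :: nat
  assumes "L \<in> {3, 4}"
    and "wf_graph G1" and "wf_graph G2"
    and "i1 \<in> verts G1" and "i2 \<in> verts G2"
    and "count_paths G1 L i1 \<noteq> count_paths G2 L i2"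
  shows "\<exists>N. is_i2gnn N \<and> node_rep N G1 i1 \<noteq> node_rep N G2 i2"
proof (intro exI conjI)
  show "is_i2gnn NN" by (rule NN_ok)
  show "node_rep NN G1 i1 \<noteq> node_rep NN G2 i2"
    using assms node_eq[OF assms(2,4)] node_eq[OF assms(3,5)] by auto
qed

end
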